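(* Let $p$ be an odd prime, $q$ a power of $p$, $R=\mathbb{F}_q[t]$, $K=\mathbb{F}_q(t)$, $K^{\rm sep}$ a separable closure of $K$, and $\mathcal{O}_{K^{\rm sep}}$ the integral closure of $R$ in $K^{\rm sep}$. Let $S$ be any subring of $\mathcal{O}_{K^{\rm sep}}$ containing $R$. Then: (a) for every finite set $A\subseteq S$ there exists $x\in S$, neither zero nor a unit of $S$, such that $(x)+(a_i)=S$ for every $a_i\in A\setminus\{0\}$; (b) for every finite set $A\subseteq S$ with $0\notin A$ and every $a\in S$ that is neither zero nor a unit, there exists $g\in S$ such that: for every $a_i\in A$, $1+a_ig$ is neither zero nor a unit; for every $a_i\in A$, $(a)+(1+a_ig)=S$; and for distinct $a_i,a_j\in A$, $(1+a_ig)+(1+a_jg)=S$. (All ideals are ideals of $S$.) *)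

theory Defs
  imports "HOL-Computational_Algebra.Polynomial" "HOL-Computational_Algebra.Fraction_Field"
begin

definition is_ring_hom :: "('a::ring_1 \<Rightarrow> 'b::ring_1) \<Rightarrow> bool" where
  "is_ring_hom h \<longleftrightarrow> h 1 = 1 \<and> (\<forall>x y. h (x + y) = h x + h y) \<and> (\<forall>x y. h (x * y) = h x * h y)"

definition separable_poly :: "'a::field poly \<Rightarrow> bool" where
  "separable_poly f \<longleftrightarrow> coprime f (pderiv f)"

definition separable_over :: "('K::field \<Rightarrow> 'L::field) \<Rightarrow> 'L \<Rightarrow> bool" where
  "separable_over \<phi> x \<longleftrightarrow> (\<exists>f. f \<noteq> 0 \<and> separable_poly f \<and> poly (map_poly \<phi> f) x = 0)"

definition splits_in :: "('K::field \<Rightarrow> 'L::field) \<Rightarrow> 'K poly \<Rightarrow> bool" where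
  "splits_in \<phi> f \<longleftrightarrow> (\<exists>c xs. map_poly \<phi> f = smult c (\<Prod>x\<leftarrow>xs. [:- x, 1:]))"

definition is_separable_closure :: "('K::field \<Rightarrow> 'L::field) \<Rightarrow> bool" where
  "is_separable_closure \<phi> \<longleftrightarrow> is_ring_hom \<phi> \<and> (\<forall>x. separable_over \<phi> x)
     \<and> (\<forall>f. separable_poly f \<longrightarrow> splits_in \<phi> f)"

definition integral_closure :: "('R::comm_ring_1 \<Rightarrow> 'L::field) \<Rightarrow> 'L set" where
  "integral_closure i = {x. \<exists>f. lead_coeff f = 1 \<and> poly (map_poly i f) x = 0}"

definition is_subring :: "'L::comm_ring_1 set \<Rightarrow> bool" where
  "is_subring S \<longleftrightarrow> 0 \<in> S \<and> 1 \<in> S \<and> (\<forall>x\<in>S. \<forall>y\<in>S. x + y \<in> S \<and> x - y \<in> S \<and> x * y \<in> S)"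

definition unit_in :: "'L::comm_ring_1 set \<Rightarrow> 'L \<Rightarrow> bool" where
  "unit_in S x \<longleftrightarrow> (\<exists>y\<in>S. x * y = 1)"

definition pideal :: "'L::comm_ring_1 set \<Rightarrow> 'L \<Rightarrow> 'L set" where
  "pideal S x = {s * x | s. s \<in> S}"

definition ideal_sum :: "'L::comm_ring_1 set \<Rightarrow> 'L set \<Rightarrow> 'L set" where
  "ideal_sum I J = {a + b | a b. a \<in> I \<and> b \<in> J}"

end

theory Submission
  imports Defs
begin

definition emb :: "('k::field poly fract \<Rightarrow> 'L::field) \<Rightarrow> 'k poly \<Rightarrow> 'L" where
  "emb \<phi> r = \<phi> (Fract r 1)"

lemma emb_eta: "(\<lambda>r. \<phi> (Fract r 1)) = emb \<phi>"
  by (simp add: emb_def fun_eq_iff)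

locale embctx =
  fixes \<phi> :: "'k::field poly fract \<Rightarrow> 'L::field"
  assumes hom: "is_ring_hom \<phi>"
begin

lemma phi_add: "\<phi> (x + y) = \<phi> x + \<phi> y" using hom by (simp add: is_ring_hom_def)
lemma phi_mult: "\<phi> (x * y) = \<phi> x * \<phi> y" using hom by (simp add: is_ring_hom_def)
lemma phi_1: "\<phi> 1 = 1" using hom by (simp add: is_ring_hom_def)
lemma phi_0: "\<phi> 0 = 0"
  using phi_add[of 0 0] by (metis add_cancel_right_right)

lemma phi_inj0: "\<phi> x = 0 \<Longrightarrow> x = 0"
proof (rule ccontr)
  assume "\<phi> x = 0" "x \<noteq> 0"
  have "\<phi> 1 = \<phi> x * \<phi> (inverse x)" using \<open>x \<noteq> 0\<close> by (simp add: phi_mult[symmetric])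
  with \<open>\<phi> x = 0\<close> show False by (simp add: phi_1)
qed

lemma emb_add: "emb \<phi> (a + b) = emb \<phi> a + emb \<phi> b"
  unfolding emb_def by (simp add: phi_add[symmetric])
lemma emb_mult: "emb \<phi> (a * b) = emb \<phi> a * emb \<phi> b"
  unfolding emb_def by (simp add: phi_mult[symmetric])
lemma emb_1: "emb \<phi> 1 = 1"
  unfolding emb_def by (simp add: One_fract_def[symmetric] phi_1)
lemma emb_0: "emb \<phi> 0 = 0"
  unfolding emb_def by (simp add: Zero_fract_def[symmetric] phi_0)
lemma emb_minus: "emb \<phi> (- a) = - emb \<phi> a"
  using emb_add[of a "-a"] by (simp add: emb_0 eq_neg_iff_add_eq_0 add.commute)
lemma emb_diff: "emb \<phi> (a - b) = emb \<phi> a - emb \<phi> b"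
  using emb_add[of a "-b"] by (simp add: emb_minus)
lemma emb_pow: "emb \<phi> (a ^ n) = emb \<phi> a ^ n"
  by (induction n) (simp_all add: emb_1 emb_mult)
lemma emb_inj0: "emb \<phi> a = 0 \<Longrightarrow> a = 0"
  unfolding emb_def using phi_inj0 by (force simp: Zero_fract_def eq_fract)

lemma key_reflect:
  assumes "emb \<phi> X * y = 1"
  shows "\<exists>r. emb \<phi> X ^ degree f * poly (map_poly (emb \<phi>) f) y = emb \<phi> (lead_coeff f + X * r)"
proof (induction f)
  case 0
  then show ?case by (auto simp: emb_0 intro: exI[of _ 0])
next
  case (pCons a p)
  then obtain r where r: "emb \<phi> X ^ degree p * poly (map_poly (emb \<phi>) p) y = emb \<phi> (lead_coeff p + X * r)"
    by blast
  show ?case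
  proof (cases "p = 0")
    case True
    then show ?thesis by (auto simp: map_poly_pCons emb_0 intro: exI[of _ 0])
  next
    case False
    have "emb \<phi> X ^ degree (pCons a p) * poly (map_poly (emb \<phi>) (pCons a p)) y
        = emb \<phi> X ^ Suc (degree p) * emb \<phi> a + (emb \<phi> X * y) * (emb \<phi> X ^ degree p * poly (map_poly (emb \<phi>) p) y)"
      using False by (simp add: map_poly_pCons emb_0 algebra_simps)
    also have "\<dots> = emb \<phi> (lead_coeff (pCons a p) + X * (r + X ^ degree p * a))"
      using False r assms by (simp add: emb_add emb_mult emb_pow algebra_simps)
    finally show ?thesis by blast
  qed
qed

end

lemma subring_neg: "is_subring S \<Longrightarrow> x \<in> S \<Longrightarrow> - x \<in> S"
  unfolding is_subring_def by (metis diff_0)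

lemma subring_prod: "finite A \<Longrightarrow> is_subring S \<Longrightarrow> (\<And>x. x \<in> A \<Longrightarrow> f x \<in> S) \<Longrightarrow> prod f A \<in> S"
proof (induction A rule: finite_induct)
  case empty then show ?case by (simp add: is_subring_def)
next
  case (insert x F) then show ?case by (simp add: is_subring_def)
qed

lemma coprime_crit:
  assumes S: "is_subring S" and "x \<in> S" "a \<in> S" "u \<in> S" "v \<in> S" "x * u + a * v = 1"
  shows "ideal_sum (pideal S x) (pideal S a) = S"
proof
  show "ideal_sum (pideal S x) (pideal S a) \<subseteq> S"
    using S assms unfolding ideal_sum_def pideal_def is_subring_def by auto
  show "S \<subseteq> ideal_sum (pideal S x) (pideal S a)"
  proof
    fix z assume z: "z \<in> S"
    have "z = (z * u) * x + (z * v) * a" using assms(6)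
      by (metis mult.commute mult.left_commute mult_1_right distrib_left)
    moreover have "z * u \<in> S" "z * v \<in> S" using S z assms unfolding is_subring_def by auto
    ultimately show "z \<in> ideal_sum (pideal S x) (pideal S a)"
      unfolding ideal_sum_def pideal_def by blast
  qed
qed


locale sctx = embctx +
  fixes S :: "'L::field set"
  assumes sub: "is_subring S"
    and rng: "range (emb \<phi>) \<subseteq> S"
    and intc: "S \<subseteq> integral_closure (emb \<phi>)"
begin

lemma S0: "0 \<in> S" and S1: "1 \<in> S" using sub by (auto simp: is_subring_def)
lemma Sadd: "x \<in> S \<Longrightarrow> y \<in> S \<Longrightarrow> x + y \<in> S" using sub by (auto simp: is_subring_def)
lemma Smult: "x \<in> S \<Longrightarrow> y \<in> S \<Longrightarrow> x * y \<in> S" using sub by (auto simp: is_subring_def)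
lemma Sdiff: "x \<in> S \<Longrightarrow> y \<in> S \<Longrightarrow> x - y \<in> S" using sub by (auto simp: is_subring_def)
lemma Sneg: "x \<in> S \<Longrightarrow> - x \<in> S" using sub subring_neg by blast
lemma Semb: "emb \<phi> r \<in> S" using rng by auto

lemma poly_in_S: "x \<in> S \<Longrightarrow> poly (map_poly (emb \<phi>) f) x \<in> S"
proof (induction f)
  case 0 then show ?case by (simp add: S0)
next
  case (pCons a p)
  then show ?case by (simp add: map_poly_pCons emb_0 Sadd Smult Semb)
qed

lemma norm_gen: "f \<noteq> 0 \<Longrightarrow> b \<in> S \<Longrightarrow> b \<noteq> 0 \<Longrightarrow> poly (map_poly (emb \<phi>) f) b = 0
   \<Longrightarrow> \<exists>c s. c \<noteq> 0 \<and> s \<in> S \<and> emb \<phi> c = b * s"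
proof (induction f)
  case 0 then show ?case by simp
next
  case (pCons a p)
  have eq: "emb \<phi> a + b * poly (map_poly (emb \<phi>) p) b = 0"
    using pCons.prems by (simp add: map_poly_pCons emb_0)
  show ?case
  proof (cases "a = 0")
    case False
    have "emb \<phi> a = b * (- poly (map_poly (emb \<phi>) p) b)" using eq by (simp add: eq_neg_iff_add_eq_0)
    moreover have "- poly (map_poly (emb \<phi>) p) b \<in> S" using pCons.prems by (simp add: Sneg poly_in_S)
    ultimately show ?thesis using False by blast
  next
    case True
    then have "p \<noteq> 0" using pCons.prems by auto
    moreover have "poly (map_poly (emb \<phi>) p) b = 0" using eq True pCons.prems by (simp add: emb_0)
    ultimately show ?thesis using pCons by blast
  qed
qed

lemma norm_elem: "b \<in> S \<Longrightarrow> b \<noteq> 0 \<Longrightarrow> \<exists>c s. c \<noteq> 0 \<and> s \<in> S \<and> emb \<phi> c = b * s"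
proof -
  assume b: "b \<in> S" "b \<noteq> 0"
  then obtain f where f: "lead_coeff f = 1" "poly (map_poly (emb \<phi>) f) b = 0"
    using intc unfolding integral_closure_def by blast
  then have "f \<noteq> 0" by auto
  with f b show ?thesis using norm_gen by blast
qed

lemma nonunit_emb:
  assumes "degree X > 0" shows "\<not> unit_in S (emb \<phi> X)"
proof
  assume "unit_in S (emb \<phi> X)"
  then obtain y where y: "y \<in> S" "emb \<phi> X * y = 1" unfolding unit_in_def by blast
  then obtain f where f: "lead_coeff f = 1" "poly (map_poly (emb \<phi>) f) y = 0"
    using intc unfolding integral_closure_def by blast
  obtain r where "emb \<phi> X ^ degree f * poly (map_poly (emb \<phi>) f) y = emb \<phi> (lead_coeff f + X * r)"
    using key_reflect[OF y(2)] by blast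
  then have "emb \<phi> (1 + X * r) = 0" using f by simp
  then have "1 + X * r = 0" by (rule emb_inj0)
  then have "X * (- r) = 1" by (metis add.commute add_eq_0_iff mult_minus_right)
  then have "is_unit X" by (metis dvdI)
  moreover have "X \<noteq> 0" using assms by auto
  ultimately show False using assms is_unit_iff_degree[of X] by simp
qed

lemma nonunit_mult:
  assumes "degree X > 0" "s \<in> S" shows "\<not> unit_in S (emb \<phi> X * s)"
proof
  assume "unit_in S (emb \<phi> X * s)"
  then obtain y where "y \<in> S" "emb \<phi> X * s * y = 1" unfolding unit_in_def by blast
  then have "unit_in S (emb \<phi> X)" unfolding unit_in_def using assms(2)
    by (metis Smult mult.assoc)
  with nonunit_emb[OF assms(1)] show False by blast
qed


lemma lemL:
  assumes "finite B"
  shows "B \<subseteq> S \<Longrightarrow> 0 \<notin> B \<Longrightarrow> \<exists>h M. h \<in> S \<and> M \<noteq> 0 \<and>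
     (\<forall>b\<in>B. \<exists>X s. degree X > 0 \<and> X dvd M \<and> s \<in> S \<and> 1 + b * h = emb \<phi> X * s)"
  using assms
proof (induction B rule: finite_induct)
  case empty
  show ?case using S0 by (intro exI[of _ 0] exI[of _ 1]) auto
next
  case (insert b' B)
  then obtain h M where hM: "h \<in> S" "M \<noteq> 0"
    "\<forall>b\<in>B. \<exists>X s. degree X > 0 \<and> X dvd M \<and> s \<in> S \<and> 1 + b * h = emb \<phi> X * s"
    by auto
  have b': "b' \<in> S" "b' \<noteq> 0" using insert.prems by auto
  obtain c' s' where cs: "c' \<noteq> 0" "s' \<in> S" "emb \<phi> c' = b' * s'"
    using norm_elem[OF b'] by blast
  define t where "t = [:0,1:] + 0 * c'"
  define X' where "X' = 1 + t * c' * M"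
  define k where "k = s' * emb \<phi> t * (1 + b' * h)"
  define h' where "h' = h + emb \<phi> M * k"
  have "t \<noteq> 0" by (simp add: t_def)
  have "degree (t * c' * M) = 1 + degree (c' * M)"
    using \<open>t \<noteq> 0\<close> cs(1) hM(2) by (simp add: degree_mult_eq t_def mult.assoc)
  then have dX: "degree X' > 0" unfolding X'_def
    by (subst degree_add_eq_right) auto
  then have "X' \<noteq> 0" by auto
  have kS: "k \<in> S" unfolding k_def using cs(2) b' hM(1) by (simp add: Smult Semb Sadd S1)
  have h'S: "h' \<in> S" unfolding h'_def using hM(1) kS by (simp add: Smult Semb Sadd)
  have old: "\<forall>b\<in>B. \<exists>X s. degree X > 0 \<and> X dvd M * X' \<and> s \<in> S \<and> 1 + b * h' = emb \<phi> X * s"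
  proof
    fix b assume "b \<in> B"
    then obtain X s where Xs: "degree X > 0" "X dvd M" "s \<in> S" "1 + b * h = emb \<phi> X * s"
      using hM(3) by blast
    obtain Y where Y: "M = X * Y" using Xs(2) by (auto elim: dvdE)
    have bS: "b \<in> S" using \<open>b \<in> B\<close> insert.prems by auto
    have "1 + b * h' = emb \<phi> X * (s + b * emb \<phi> Y * k)"
      unfolding h'_def Y using Xs(4) by (simp add: emb_mult algebra_simps)
    moreover have "s + b * emb \<phi> Y * k \<in> S" using Xs(3) bS kS by (simp add: Smult Semb Sadd)
    moreover have "X dvd M * X'" using Xs(2) by simp
    ultimately show "\<exists>X s. degree X > 0 \<and> X dvd M * X' \<and> s \<in> S \<and> 1 + b * h' = emb \<phi> X * s"
      using Xs(1) by blast
  qed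
  have "emb \<phi> X' = 1 + emb \<phi> t * (b' * s') * emb \<phi> M"
    unfolding X'_def by (simp add: emb_add emb_mult emb_1 cs(3)[symmetric])
  then have "1 + b' * h' = emb \<phi> X' * (1 + b' * h)"
    unfolding h'_def k_def by (simp add: algebra_simps)
  moreover have "1 + b' * h \<in> S" using b' hM(1) by (simp add: Smult Sadd S1)
  ultimately have new: "\<exists>X s. degree X > 0 \<and> X dvd M * X' \<and> s \<in> S \<and> 1 + b' * h' = emb \<phi> X * s"
    using dX dvd_triv_right[of X' M] by blast
  show ?case using old new h'S \<open>X' \<noteq> 0\<close> hM(2)
    by (intro exI[of _ h'] exI[of _ "M * X'"]) auto
qed

lemma partA:
  assumes "finite A" "A \<subseteq> S"
  shows "\<exists>x\<in>S. x \<noteq> 0 \<and> \<not> unit_in S x \<and>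
               (\<forall>ai\<in>A - {0}. ideal_sum (pideal S x) (pideal S ai) = S)"
proof -
  have "\<forall>a\<in>A - {0}. \<exists>c s. c \<noteq> 0 \<and> s \<in> S \<and> emb \<phi> c = a * s"
    using assms norm_elem by blast
  then obtain cf sf where cf: "\<And>a. a \<in> A - {0} \<Longrightarrow> cf a \<noteq> 0 \<and> sf a \<in> S \<and> emb \<phi> (cf a) = a * sf a"
    by metis
  define C where "C = (\<Prod>a\<in>A - {0}. cf a)"
  have "C \<noteq> 0" unfolding C_def using cf assms(1) by auto
  define t where "t = [:0,1:] + 0 * C"
  define X where "X = 1 + t * C"
  have "degree (t * C) = 1 + degree C"
    using \<open>C \<noteq> 0\<close> by (simp add: degree_mult_eq t_def)
  then have dX: "degree X > 0" unfolding X_def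
    by (subst degree_add_eq_right) auto
  then have "X \<noteq> 0" by auto
  show ?thesis
  proof (intro bexI[of _ "emb \<phi> X"] conjI ballI)
    show "emb \<phi> X \<noteq> 0" using \<open>X \<noteq> 0\<close> emb_inj0 by blast
    show "\<not> unit_in S (emb \<phi> X)" using nonunit_emb[OF dX] .
    show "emb \<phi> X \<in> S" by (rule Semb)
    fix a assume a: "a \<in> A - {0}"
    have "cf a dvd C" unfolding C_def using a assms(1) by (intro dvd_prodI) auto
    then obtain r where r: "C = cf a * r" by (auto elim: dvdE)
    have aS: "a \<in> S" using a assms by auto
    have "emb \<phi> X * 1 + a * (- (emb \<phi> t * sf a * emb \<phi> r)) = 1"
      unfolding X_def r using cf[OF a] by (simp add: emb_add emb_mult emb_1 algebra_simps)
    moreover have "- (emb \<phi> t * sf a * emb \<phi> r) \<in> S" using cf[OF a] by (simp add: Sneg Smult Semb)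
    ultimately show "ideal_sum (pideal S (emb \<phi> X)) (pideal S a) = S"
      using coprime_crit[OF sub Semb aS S1] by blast
  qed
qed

lemma partB:
  assumes A: "finite A" "A \<subseteq> S" "0 \<notin> A" and a: "a \<in> S" "a \<noteq> 0" "\<not> unit_in S a"
  shows "\<exists>g\<in>S.
               (\<forall>ai\<in>A. 1 + ai * g \<noteq> 0 \<and> \<not> unit_in S (1 + ai * g)) \<and>
               (\<forall>ai\<in>A. ideal_sum (pideal S a) (pideal S (1 + ai * g)) = S) \<and>
               (\<forall>ai\<in>A. \<forall>aj\<in>A. ai \<noteq> aj \<longrightarrow>
                  ideal_sum (pideal S (1 + ai * g)) (pideal S (1 + aj * g)) = S)"
proof -
  define P where "P = {(x,y). x \<in> A \<and> y \<in> A \<and> x \<noteq> y}"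
  have "P \<subseteq> A \<times> A" unfolding P_def by auto
  then have fP: "finite P" using A(1) finite_subset by blast
  define D where "D = (\<Prod>q\<in>P. fst q - snd q)"
  have D0: "D \<noteq> 0" unfolding D_def using fP by (auto simp: P_def)
  have DS: "D \<in> S" unfolding D_def using fP
    by (intro subring_prod[OF fP sub]) (use A(2) in \<open>auto simp: P_def intro!: Sdiff\<close>)
  define B where "B = (\<lambda>ai. ai * a * D) ` A"
  have BS: "B \<subseteq> S" unfolding B_def using A(2) a(1) DS by (auto simp: Smult)
  have B0: "0 \<notin> B" unfolding B_def using A(3) a(2) D0 by auto
  have fB: "finite B" unfolding B_def using A(1) by simp
  obtain h M where hM: "h \<in> S"
    "\<forall>b\<in>B. \<exists>X s. degree X > 0 \<and> X dvd M \<and> s \<in> S \<and> 1 + b * h = emb \<phi> X * s"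
    using lemL[OF fB BS B0] by blast
  define g where "g = a * D * h"
  have gS: "g \<in> S" unfolding g_def using a(1) DS hM(1) by (simp add: Smult)
  show ?thesis
  proof (intro bexI[OF _ gS] conjI ballI impI)
    fix ai assume ai: "ai \<in> A"
    have aiS: "ai \<in> S" using ai A(2) by auto
    obtain X s where Xs: "degree X > 0" "s \<in> S" "1 + (ai * a * D) * h = emb \<phi> X * s"
      using hM(2) ai unfolding B_def by blast
    have "1 + ai * g = emb \<phi> X * s" using Xs(3) by (simp add: g_def mult.assoc mult.left_commute)
    then show "\<not> unit_in S (1 + ai * g)" using nonunit_mult[OF Xs(1,2)] by simp
    have eq1: "a * (- (ai * D * h)) + (1 + ai * g) * 1 = 1" by (simp add: g_def algebra_simps)
    have m: "- (ai * D * h) \<in> S" using aiS DS hM(1) by (simp add: Smult Sneg)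
    show "ideal_sum (pideal S a) (pideal S (1 + ai * g)) = S"
      by (rule coprime_crit[OF sub a(1) _ m S1 eq1]) (use aiS gS in \<open>simp add: Sadd Smult S1\<close>)
    show "1 + ai * g \<noteq> 0"
    proof
      assume "1 + ai * g = 0"
      then have "a * (- (ai * D * h)) = 1" using eq1 by simp
      then show False using a(3) m unfolding unit_in_def by blast
    qed
  next
    fix ai aj assume ai: "ai \<in> A" and aj: "aj \<in> A" and ne: "ai \<noteq> aj"
    have aiS: "ai \<in> S" and ajS: "aj \<in> S" using ai aj A(2) by auto
    have "(ai, aj) \<in> P" using ai aj ne by (simp add: P_def)
    define E where "E = (\<Prod>q\<in>P - {(ai,aj)}. fst q - snd q)"
    have DE: "D = (ai - aj) * E" unfolding D_def E_def
      using prod.remove[OF fP \<open>(ai, aj) \<in> P\<close>, of "\<lambda>q. fst q - snd q"] by simp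
    have ES: "E \<in> S" unfolding E_def using fP
      by (intro subring_prod[OF _ sub]) (use A(2) in \<open>auto simp: P_def intro!: Sdiff\<close>)
    define e where "e = a * E * h"
    have eS: "e \<in> S" unfolding e_def using a(1) ES hM(1) by (simp add: Smult)
    have ge: "g = (ai - aj) * e" unfolding g_def e_def DE by (simp add: algebra_simps)
    have eq: "(1 + ai * g) * (1 + ai * e * aj) + (1 + aj * g) * (- (ai * ai * e)) = 1"
      unfolding ge by (simp add: algebra_simps)
    show "ideal_sum (pideal S (1 + ai * g)) (pideal S (1 + aj * g)) = S"
      by (rule coprime_crit[OF sub _ _ _ _ eq])
        (use aiS ajS gS eS in \<open>simp_all add: Sadd Smult S1 Sneg\<close>)
  qed
qed
end

theorem lemma2p17:
  fixes p q :: nat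
    and \<phi> :: "'k::{field,finite} poly fract \<Rightarrow> 'L::field"
    and S :: "'L set"
  assumes "prime p" and "odd p" and "CHAR('k) = p" and "card (UNIV :: 'k set) = q" and "\<exists>n. q = p ^ n"
    and "is_separable_closure \<phi>"
    and "is_subring S"
    and "range (\<lambda>r. \<phi> (Fract r 1)) \<subseteq> S"
    and "S \<subseteq> integral_closure (\<lambda>r. \<phi> (Fract r 1))"
  shows "(\<forall>A. finite A \<and> A \<subseteq> S \<longrightarrow>
            (\<exists>x\<in>S. x \<noteq> 0 \<and> \<not> unit_in S x \<and>
               (\<forall>ai\<in>A - {0}. ideal_sum (pideal S x) (pideal S ai) = S)))
      \<and> (\<forall>A a. finite A \<and> A \<subseteq> S \<and> 0 \<notin> A \<and> a \<in> S \<and> a \<noteq> 0 \<and> \<not> unit_in S a \<longrightarrow>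
            (\<exists>g\<in>S.
               (\<forall>ai\<in>A. 1 + ai * g \<noteq> 0 \<and> \<not> unit_in S (1 + ai * g)) \<and>
               (\<forall>ai\<in>A. ideal_sum (pideal S a) (pideal S (1 + ai * g)) = S) \<and>
               (\<forall>ai\<in>A. \<forall>aj\<in>A. ai \<noteq> aj \<longrightarrow>
                  ideal_sum (pideal S (1 + ai * g)) (pideal S (1 + aj * g)) = S)))"
  proof -
  have hom: "is_ring_hom \<phi>" using assms(6) by (simp add: is_separable_closure_def)
  interpret sctx \<phi> S
  proof unfold_locales
    show "is_ring_hom \<phi>" by (rule hom)
    show "is_subring S" by (rule assms(7))
    show "range (emb \<phi>) \<subseteq> S" using assms(8) by (auto simp: emb_def image_subset_iff)
    show "S \<subseteq> integral_closure (emb \<phi>)" using assms(9) by (simp add: emb_eta)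
  qed
  show ?thesis using partA partB by blast
qed

end
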